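(* Let $a\in\mathbb{R}$, $\sigma>0$, $\gamma>0$, $\lambda>0$, $T\ge1$, channel transition probabilities $p_{cc'}$, and let $\tilde V_t$, $t=0,\ldots,T$, be defined on $\mathbb{R}_+\times\{0,1\}$ by the folded value iteration in the context. Then for each $c\in\{0,1\}$ and each $t\in\{0,1,\ldots,T\}$, the function $\tilde\Delta\mapsto\tilde V_t(\tilde\Delta,c)$ is non-decreasing on $\mathbb{R}_+$.
   Context: $p_{01},p_{10}\in[0,1]$, $p_{00}=1-p_{01}$, $p_{11}=1-p_{10}$; $\psi(v)=e^{-v^2/(2\sigma^2)}$, $\varphi(v,s)=\psi(v-s)+\psi(v+s)$; $\mathbb{R}_+=[0,\infty)$. Folded recursion: $\tilde V_0\equiv1$, $\tilde Q_{t+1}(\tilde\Delta,c;0)=e^{\gamma\tilde\Delta^2}\sum_{c_+\in\{0,1\}}p_{cc_+}\int_{\mathbb{R}_+}\varphi(\tilde\Delta_+,a\tilde\Delta)\tilde V_t(\tilde\Delta_+,c_+)d\tilde\Delta_+$, $\tilde Q_{t+1}(\tilde\Delta,c;1)=(1-c)e^{\gamma(\lambda+\tilde\Delta^2)}\sum_{c_+}p_{cc_+}\int_{\mathbb{R}_+}\varphi(\tilde\Delta_+,a\tilde\Delta)\tilde V_t(\tilde\Delta_+,c_+)d\tilde\Delta_++2c\,e^{\gamma\lambda}\sum_{c_+}p_{cc_+}\int_{\mathbb{R}_+}\psi(\tilde\Delta_+)\tilde V_t(\tilde\Delta_+,c_+)d\tilde\Delta_+$, $\tilde V_{t+1}(\tilde\Delta,c)=\min_{u\in\{0,1\}}\tilde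 Q_{t+1}(\tilde\Delta,c;u)$. This is the value iteration of the "folded" risk-sensitive MDP for an estimation error magnitude $\tilde\Delta$ and Gilbert–Elliott channel state $c$. *)

theory Defs
  imports "HOL-Analysis.Analysis"
begin

definition psi :: "real \<Rightarrow> real \<Rightarrow> real" where
  "psi \<sigma> v = exp (- (v\<^sup>2) / (2 * \<sigma>\<^sup>2))"

definition phi :: "real \<Rightarrow> real \<Rightarrow> real \<Rightarrow> real" where
  "phi \<sigma> v s = psi \<sigma> (v - s) + psi \<sigma> (v + s)"

definition ptrans :: "real \<Rightarrow> real \<Rightarrow> nat \<Rightarrow> nat \<Rightarrow> real" where
  "ptrans p01 p10 c c' =
     (if c = 0 then (if c' = 0 then 1 - p01 else p01)
      else (if c' = 0 then p10 else 1 - p10))"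

text \<open>Folded value iteration. Values live in ennreal (integrals of nonnegative
  functions over R_+ w.r.t. Lebesgue measure, possibly infinite).
  Vt a sigma gamma lambda p01 p10 t d c is V~_t(d, c).\<close>
primrec Vt :: "real \<Rightarrow> real \<Rightarrow> real \<Rightarrow> real \<Rightarrow> real \<Rightarrow> real \<Rightarrow> nat \<Rightarrow> real \<Rightarrow> nat \<Rightarrow> ennreal" where
  "Vt a \<sigma> \<gamma> lam p01 p10 0 = (\<lambda>d c. 1)"
| "Vt a \<sigma> \<gamma> lam p01 p10 (Suc t) = (\<lambda>d c.
     min
      (ennreal (exp (\<gamma> * d\<^sup>2)) *
         (\<Sum>c'\<in>{0,1}. ennreal (ptrans p01 p10 c c') *
            (\<integral>\<^sup>+ x \<in> {0..}. ennreal (phi \<sigma> x (a * d)) * Vt a \<sigma> \<gamma> lam p01 p10 t x c' \<partial>lborel)))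
      (ennreal (1 - real c) * ennreal (exp (\<gamma> * (lam + d\<^sup>2))) *
         (\<Sum>c'\<in>{0,1}. ennreal (ptrans p01 p10 c c') *
            (\<integral>\<^sup>+ x \<in> {0..}. ennreal (phi \<sigma> x (a * d)) * Vt a \<sigma> \<gamma> lam p01 p10 t x c' \<partial>lborel))
       + ennreal (2 * real c) * ennreal (exp (\<gamma> * lam)) *
         (\<Sum>c'\<in>{0,1}. ennreal (ptrans p01 p10 c c') *
            (\<integral>\<^sup>+ x \<in> {0..}. ennreal (psi \<sigma> x) * Vt a \<sigma> \<gamma> lam p01 p10 t x c' \<partial>lborel))))"

end

theory Submission
  imports Defs "HOL-Probability.Probability"
begin


lemma psi_even: "psi \<sigma> (- v) = psi \<sigma> v"
  by (simp add: psi_def)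

lemma phi_even: "phi \<sigma> x (- s) = phi \<sigma> x s"
  by (simp add: phi_def)

lemma psi_nonneg: "0 \<le> psi \<sigma> v" by (simp add: psi_def)
lemma phi_nonneg: "0 \<le> phi \<sigma> x s" by (simp add: phi_def psi_nonneg)

lemma psi_meas[measurable]: "psi \<sigma> \<in> borel_measurable borel"
  unfolding psi_def[abs_def] by measurable

lemma phi_cosh:
  assumes "\<sigma> > 0"
  shows "phi \<sigma> x s = 2 * exp (- x\<^sup>2 / (2*\<sigma>\<^sup>2)) * exp (- s\<^sup>2 / (2*\<sigma>\<^sup>2)) * cosh (x * s / \<sigma>\<^sup>2)"
proof -
  have e1: "- (x - s)\<^sup>2 / (2*\<sigma>\<^sup>2) = - x\<^sup>2 / (2*\<sigma>\<^sup>2) + - s\<^sup>2 / (2*\<sigma>\<^sup>2) + x * s / \<sigma>\<^sup>2"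
    using assms by (simp add: field_simps power2_eq_square)
  have e2: "- (x + s)\<^sup>2 / (2*\<sigma>\<^sup>2) = - x\<^sup>2 / (2*\<sigma>\<^sup>2) + - s\<^sup>2 / (2*\<sigma>\<^sup>2) + - (x * s / \<sigma>\<^sup>2)"
    using assms by (simp add: field_simps power2_eq_square)
  show ?thesis
    unfolding phi_def psi_def e1 e2 exp_add cosh_field_def
    by (simp add: field_simps)
qed

lemma cosh_prod: "cosh (u::real) * cosh v = (cosh (u + v) + cosh (u - v)) / 2"
  by (simp add: cosh_add cosh_diff)

lemma cosh_cross:
  fixes \<alpha> \<beta> x y :: real
  assumes "0 \<le> \<beta>" "\<beta> \<le> \<alpha>" "0 \<le> x" "x \<le> y"
  shows "cosh (\<alpha>*x) * cosh (\<beta>*y) \<le> cosh (\<alpha>*y) * cosh (\<beta>*x)"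
proof -
  have h1: "(\<alpha>-\<beta>)*(y-x) \<ge> 0" "(\<alpha>+\<beta>)*(y-x) \<ge> 0" "(\<alpha>-\<beta>)*(y+x) \<ge> 0"
    using assms by auto
  have n1: "0 \<le> \<alpha>*x + \<beta>*y" "0 \<le> \<alpha>*y + \<beta>*x" using assms by auto
  have c1: "cosh (\<alpha>*x + \<beta>*y) \<le> cosh (\<alpha>*y + \<beta>*x)"
    using n1 h1(1) by (subst cosh_real_nonneg_le_iff) (auto simp: algebra_simps)
  have "\<bar>\<alpha>*x - \<beta>*y\<bar> \<le> \<alpha>*y - \<beta>*x" using h1 by (auto simp: algebra_simps abs_if)
  moreover have "0 \<le> \<alpha>*y - \<beta>*x" using h1 by (auto simp: algebra_simps)
  ultimately have c2: "cosh (\<alpha>*x - \<beta>*y) \<le> cosh (\<alpha>*y - \<beta>*x)"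
    by (metis abs_ge_zero cosh_real_abs cosh_real_nonneg_le_iff)
  show ?thesis unfolding cosh_prod using c1 c2 by simp
qed

lemma phi_downset:
  assumes "\<sigma> > 0" "0 \<le> s" "s \<le> s'" "0 \<le> x" "x \<le> y"
    and "phi \<sigma> y s' \<le> phi \<sigma> y s"
  shows "phi \<sigma> x s' \<le> phi \<sigma> x s"
proof -
  define E where "E = (\<lambda>s. exp (- s\<^sup>2 / (2*\<sigma>\<^sup>2)))"
  define \<alpha> where "\<alpha> = s' / \<sigma>\<^sup>2"
  define \<beta> where "\<beta> = s / \<sigma>\<^sup>2"
  have ab: "0 \<le> \<beta>" "\<beta> \<le> \<alpha>" using assms by (auto simp: \<alpha>_def \<beta>_def divide_right_mono)
  have P: "\<And>z t. phi \<sigma> z t = (2 * exp (- z\<^sup>2 / (2*\<sigma>\<^sup>2))) * (E t * cosh (z * t / \<sigma>\<^sup>2))"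
    using phi_cosh[OF assms(1)] by (simp add: E_def mult.assoc)
  have Epos: "\<And>t. E t > 0" by (simp add: E_def)
  have ea: "\<And>z. z * s' / \<sigma>\<^sup>2 = \<alpha> * z" "\<And>z. z * s / \<sigma>\<^sup>2 = \<beta> * z"
    by (simp_all add: \<alpha>_def \<beta>_def)
  have pos2: "\<And>z. 0 < 2 * exp (- z\<^sup>2 / (2*\<sigma>\<^sup>2))" by simp
  have hy: "E s' * cosh (\<alpha>*y) \<le> E s * cosh (\<beta>*y)"
    using assms(6) unfolding P ea mult_le_cancel_left_pos[OF pos2] .
  have "E s' * cosh (\<alpha>*x) * cosh (\<beta>*y) \<le> E s' * (cosh (\<alpha>*y) * cosh (\<beta>*x))"
    using cosh_cross[OF ab assms(4,5)] Epos[of s'] by (simp add: mult.assoc)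
  also have "\<dots> = (E s' * cosh (\<alpha>*y)) * cosh (\<beta>*x)" by simp
  also have "\<dots> \<le> (E s * cosh (\<beta>*y)) * cosh (\<beta>*x)"
    using hy by (rule mult_right_mono) simp
  finally have "(E s' * cosh (\<alpha>*x)) * cosh (\<beta>*y) \<le> (E s * cosh (\<beta>*x)) * cosh (\<beta>*y)"
    by (simp add: algebra_simps)
  then have "E s' * cosh (\<alpha>*x) \<le> E s * cosh (\<beta>*x)"
    using cosh_real_pos[of "\<beta>*y"] by (simp add: mult_le_cancel_right)
  then show ?thesis unfolding P ea mult_le_cancel_left_pos[OF pos2] .
qed



lemma psi_normal: "\<sigma> > 0 \<Longrightarrow> psi \<sigma> x = sqrt (2 * pi * \<sigma>\<^sup>2) * normal_density 0 \<sigma> x"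
  by (simp add: psi_def normal_density_def)

lemma psi_finite:
  assumes "\<sigma> > 0"
  shows "(\<integral>\<^sup>+x. ennreal (psi \<sigma> x) \<partial>lborel) < \<infinity>"
proof -
  have "(\<integral>\<^sup>+x. ennreal (psi \<sigma> x) \<partial>lborel)
      = (\<integral>\<^sup>+x. ennreal (sqrt (2 * pi * \<sigma>\<^sup>2)) * ennreal (normal_density 0 \<sigma> x) \<partial>lborel)"
    using assms by (simp add: psi_normal ennreal_mult)
  also have "\<dots> = ennreal (sqrt (2 * pi * \<sigma>\<^sup>2)) * (\<integral>\<^sup>+x. ennreal (normal_density 0 \<sigma> x) \<partial>lborel)"
    by (rule nn_integral_cmult) simp
  also have "(\<integral>\<^sup>+x. ennreal (normal_density 0 \<sigma> x) \<partial>lborel) = ennreal 1"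
    using assms by (subst nn_integral_eq_integral) auto
  finally show ?thesis by (simp add: ennreal_mult_less_top)
qed

lemma psi_shift:
  "(\<integral>\<^sup>+x. ennreal (psi \<sigma> (x - s)) \<partial>lborel) = (\<integral>\<^sup>+x. ennreal (psi \<sigma> x) \<partial>lborel)"
  using nn_integral_real_affine[of "\<lambda>x. ennreal (psi \<sigma> (x - s))" 1 s] by simp

lemma phi_mass:
  "(\<integral>\<^sup>+x\<in>{0..}. ennreal (phi \<sigma> x s) \<partial>lborel) = (\<integral>\<^sup>+x. ennreal (psi \<sigma> x) \<partial>lborel)"
proof -
  have split: "\<And>x. ennreal (phi \<sigma> x s) * indicator {0..} x
     = ennreal (psi \<sigma> (x - s)) * indicator {0..} x + ennreal (psi \<sigma> (x + s)) * indicator {0..} x"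
    by (simp add: phi_def psi_nonneg ennreal_plus distrib_right)
  have "(\<integral>\<^sup>+x\<in>{0..}. ennreal (phi \<sigma> x s) \<partial>lborel)
     = (\<integral>\<^sup>+x\<in>{0..}. ennreal (psi \<sigma> (x - s)) \<partial>lborel) + (\<integral>\<^sup>+x\<in>{0..}. ennreal (psi \<sigma> (x + s)) \<partial>lborel)"
    unfolding split by (rule nn_integral_add) auto
  also have "(\<integral>\<^sup>+x\<in>{0..}. ennreal (psi \<sigma> (x + s)) \<partial>lborel)
      = (\<integral>\<^sup>+x. ennreal (psi \<sigma> (0 + (-1) * x + s)) * indicator {0..} (0 + (-1) * x) \<partial>lborel)"
    using nn_integral_real_affine[of "\<lambda>x. ennreal (psi \<sigma> (x + s)) * indicator {0..} x" "-1" 0] by simp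
  also have "\<dots> = (\<integral>\<^sup>+x\<in>{..<0}. ennreal (psi \<sigma> (x - s)) \<partial>lborel)"
  proof (rule nn_integral_cong_AE)
    show "AE x in lborel. ennreal (psi \<sigma> (0 + (-1) * x + s)) * indicator {0..} (0 + (-1) * x)
        = ennreal (psi \<sigma> (x - s)) * indicator {..<0} x"
      using AE_lborel_singleton[of 0]
    proof eventually_elim
      case (elim x)
      have "psi \<sigma> (0 + (-1) * x + s) = psi \<sigma> (x - s)"
        using psi_even[of \<sigma> "x - s"] by simp
      then show ?case using elim by (auto simp: indicator_def)
    qed
  qed
  also have "(\<integral>\<^sup>+x\<in>{0..}. ennreal (psi \<sigma> (x - s)) \<partial>lborel) + \<dots>
      = (\<integral>\<^sup>+x. ennreal (psi \<sigma> (x - s)) * indicator {0..} x + ennreal (psi \<sigma> (x - s)) * indicator {..<0} x \<partial>lborel)"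
    by (rule nn_integral_add[symmetric]) auto
  also have "\<dots> = (\<integral>\<^sup>+x. ennreal (psi \<sigma> (x - s)) \<partial>lborel)"
    by (rule nn_integral_cong) (auto simp: indicator_def)
  finally show ?thesis using psi_shift by simp
qed

lemma mono_ext_meas:
  fixes V :: "real \<Rightarrow> ennreal"
  assumes "mono_on {0..} V"
  shows "(\<lambda>x. V (max 0 x)) \<in> borel_measurable borel"
proof (rule borel_measurableI_greater)
  fix y
  have "is_interval {x. y < V (max 0 x)}"
    unfolding is_interval_1
  proof (intro ballI allI impI, elim conjE)
    fix a b x assume "a \<in> {x. y < V (max 0 x)}" "b \<in> {x. y < V (max 0 x)}" "a \<le> x" "x \<le> b"
    then have "y < V (max 0 a)" by simp
    also have "V (max 0 a) \<le> V (max 0 x)"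
      using assms \<open>a \<le> x\<close> by (intro mono_onD[OF assms]) auto
    finally show "x \<in> {x. y < V (max 0 x)}" by simp
  qed
  then show "{x \<in> space borel. y < V (max 0 x)} \<in> sets borel"
    using real_interval_borel_measurable by simp
qed



lemma key_mono:
  fixes V :: "real \<Rightarrow> ennreal"
  assumes sig: "\<sigma> > 0" and V: "mono_on {0..} V" and s: "0 \<le> s" "s \<le> s'"
  shows "(\<integral>\<^sup>+x\<in>{0..}. ennreal (phi \<sigma> x s) * V x \<partial>lborel)
       \<le> (\<integral>\<^sup>+x\<in>{0..}. ennreal (phi \<sigma> x s') * V x \<partial>lborel)"
proof -
  define W where "W = (\<lambda>x. V (max 0 x))"
  have Wm[measurable]: "W \<in> borel_measurable borel" unfolding W_def by (rule mono_ext_meas[OF V])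
  have Wmono: "W x \<le> W y" if "x \<le> y" for x y
    unfolding W_def by (rule mono_onD[OF V]) (use that in auto)
  define f where "f = (\<lambda>x. ennreal (phi \<sigma> x s))"
  define g where "g = (\<lambda>x. ennreal (phi \<sigma> x s'))"
  have fm[measurable]: "f \<in> borel_measurable borel" unfolding f_def phi_def by measurable
  have gm[measurable]: "g \<in> borel_measurable borel" unfolding g_def phi_def by measurable
  define L where "L = {x. 0 \<le> x \<and> phi \<sigma> x s' \<le> phi \<sigma> x s}"
  define R where "R = {x. 0 \<le> x \<and> phi \<sigma> x s < phi \<sigma> x s'}"
  have phim: "(\<lambda>x. phi \<sigma> x t) \<in> borel_measurable borel" for t unfolding phi_def by measurable
  have Lm[measurable]: "L \<in> sets borel" unfolding L_def using phim[of s] phim[of s'] by measurable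
  have Rm[measurable]: "R \<in> sets borel" unfolding R_def using phim[of s] phim[of s'] by measurable
  have LR: "{0..} = L \<union> R" "L \<inter> R = {}" unfolding L_def R_def by auto
  have LRle: "x \<le> y" if "x \<in> L" "y \<in> R" for x y
  proof (rule ccontr)
    assume "\<not> x \<le> y"
    then have "phi \<sigma> y s' \<le> phi \<sigma> y s"
      using phi_downset[OF sig s, of y x] that unfolding L_def R_def by auto
    then show False using that unfolding R_def by auto
  qed
  define c where "c = (SUP x\<in>L. W x)"
  have cL: "W x \<le> c" if "x \<in> L" for x unfolding c_def using that by (rule SUP_upper)
  have cR: "c \<le> W y" if "y \<in> R" for y unfolding c_def
    by (rule SUP_least) (use Wmono LRle that in blast)
  have eqV: "(\<integral>\<^sup>+x\<in>{0..}. h x * V x \<partial>lborel) = (\<integral>\<^sup>+x\<in>{0..}. h x * W x \<partial>lborel)" for h :: "real \<Rightarrow> ennreal"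
    by (rule nn_integral_cong) (auto simp: W_def indicator_def)
  define D1 where "D1 = (\<integral>\<^sup>+x\<in>L. ennreal (phi \<sigma> x s - phi \<sigma> x s') \<partial>lborel)"
  define D2 where "D2 = (\<integral>\<^sup>+x\<in>R. ennreal (phi \<sigma> x s' - phi \<sigma> x s) \<partial>lborel)"
  have d1m[measurable]: "(\<lambda>x. ennreal (phi \<sigma> x s - phi \<sigma> x s')) \<in> borel_measurable borel"
    unfolding phi_def by measurable
  have d2m[measurable]: "(\<lambda>x. ennreal (phi \<sigma> x s' - phi \<sigma> x s)) \<in> borel_measurable borel"
    unfolding phi_def by measurable
  have fL: "f x * indicator L x = g x * indicator L x + ennreal (phi \<sigma> x s - phi \<sigma> x s') * indicator L x" for x
    by (auto simp: f_def g_def L_def indicator_def ennreal_plus[symmetric] phi_nonneg simp del: ennreal_plus)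
  have gR: "g x * indicator R x = f x * indicator R x + ennreal (phi \<sigma> x s' - phi \<sigma> x s) * indicator R x" for x
    by (auto simp: f_def g_def R_def indicator_def ennreal_plus[symmetric] phi_nonneg simp del: ennreal_plus)
  have M: "(\<integral>\<^sup>+x\<in>{0..}. f x \<partial>lborel) = (\<integral>\<^sup>+x\<in>{0..}. g x \<partial>lborel)"
    unfolding f_def g_def phi_mass ..
  have Mfin: "(\<integral>\<^sup>+x\<in>{0..}. f x \<partial>lborel) < \<infinity>"
    unfolding f_def phi_mass using psi_finite[OF sig] .
  have PL: "(\<integral>\<^sup>+x\<in>L. f x \<partial>lborel) = (\<integral>\<^sup>+x\<in>L. g x \<partial>lborel) + D1"
    unfolding D1_def fL by (rule nn_integral_add) auto
  have PR: "(\<integral>\<^sup>+x\<in>R. g x \<partial>lborel) = (\<integral>\<^sup>+x\<in>R. f x \<partial>lborel) + D2"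
    unfolding D2_def gR by (rule nn_integral_add) auto
  have Mf: "(\<integral>\<^sup>+x\<in>{0..}. f x \<partial>lborel) = (\<integral>\<^sup>+x\<in>L. f x \<partial>lborel) + (\<integral>\<^sup>+x\<in>R. f x \<partial>lborel)"
    unfolding LR(1) by (rule nn_integral_disjoint_pair) (auto simp: LR)
  have Mg: "(\<integral>\<^sup>+x\<in>{0..}. g x \<partial>lborel) = (\<integral>\<^sup>+x\<in>L. g x \<partial>lborel) + (\<integral>\<^sup>+x\<in>R. g x \<partial>lborel)"
    unfolding LR(1) by (rule nn_integral_disjoint_pair) (auto simp: LR)
  define P' where "P' = (\<integral>\<^sup>+x\<in>L. g x \<partial>lborel)"
  define Q where "Q = (\<integral>\<^sup>+x\<in>R. f x \<partial>lborel)"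
  have e1: "(P' + Q) + D1 = (\<integral>\<^sup>+x\<in>{0..}. f x \<partial>lborel)"
    unfolding Mf PL P'_def Q_def by (simp only: ac_simps)
  have e2: "(P' + Q) + D2 = (\<integral>\<^sup>+x\<in>{0..}. g x \<partial>lborel)"
    unfolding Mg PR P'_def Q_def by (simp only: ac_simps)
  have "(P' + Q) + D1 = (P' + Q) + D2" unfolding e1 e2 M ..
  moreover have "P' + Q \<noteq> \<infinity>"
  proof -
    have "P' + Q \<le> (P' + Q) + D1" by (rule add_increasing2) auto
    then show ?thesis using Mfin e1 by (auto simp: top_unique)
  qed
  ultimately have D12: "D1 = D2" unfolding ennreal_add_left_cancel by blast
  have A: "(\<integral>\<^sup>+x\<in>L. f x * W x \<partial>lborel) \<le> (\<integral>\<^sup>+x\<in>L. g x * W x \<partial>lborel) + c * D1"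
  proof -
    have "(\<integral>\<^sup>+x\<in>L. f x * W x \<partial>lborel)
        \<le> (\<integral>\<^sup>+x. g x * W x * indicator L x + c * (ennreal (phi \<sigma> x s - phi \<sigma> x s') * indicator L x) \<partial>lborel)"
    proof (rule nn_integral_mono)
      fix x
      show "f x * W x * indicator L x \<le> g x * W x * indicator L x + c * (ennreal (phi \<sigma> x s - phi \<sigma> x s') * indicator L x)"
      proof (cases "x \<in> L")
        case True
        have "f x * W x = g x * W x + ennreal (phi \<sigma> x s - phi \<sigma> x s') * W x"
          using fL[of x] True by (simp add: distrib_right)
        also have "\<dots> \<le> g x * W x + ennreal (phi \<sigma> x s - phi \<sigma> x s') * c"
          using cL[OF True] by (intro add_left_mono mult_left_mono) auto
        finally show ?thesis using True by (simp add: mult.commute)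
      qed simp
    qed
    also have "\<dots> = (\<integral>\<^sup>+x\<in>L. g x * W x \<partial>lborel) + c * D1"
      unfolding D1_def by (subst nn_integral_add) (auto simp: nn_integral_cmult)
    finally show ?thesis .
  qed
  have B: "(\<integral>\<^sup>+x\<in>R. f x * W x \<partial>lborel) + c * D2 \<le> (\<integral>\<^sup>+x\<in>R. g x * W x \<partial>lborel)"
  proof -
    have "(\<integral>\<^sup>+x\<in>R. f x * W x \<partial>lborel) + c * D2
        = (\<integral>\<^sup>+x. f x * W x * indicator R x + c * (ennreal (phi \<sigma> x s' - phi \<sigma> x s) * indicator R x) \<partial>lborel)"
      unfolding D2_def by (subst nn_integral_add) (auto simp: nn_integral_cmult)
    also have "\<dots> \<le> (\<integral>\<^sup>+x\<in>R. g x * W x \<partial>lborel)"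
    proof (rule nn_integral_mono)
      fix x
      show "f x * W x * indicator R x + c * (ennreal (phi \<sigma> x s' - phi \<sigma> x s) * indicator R x) \<le> g x * W x * indicator R x"
      proof (cases "x \<in> R")
        case True
        have "f x * W x + ennreal (phi \<sigma> x s' - phi \<sigma> x s) * c \<le> f x * W x + ennreal (phi \<sigma> x s' - phi \<sigma> x s) * W x"
          using cR[OF True] by (intro add_left_mono mult_left_mono) auto
        also have "\<dots> = g x * W x"
          using gR[of x] True by (simp add: distrib_right)
        finally show ?thesis using True by (simp add: mult.commute)
      qed simp
    qed
    finally show ?thesis .
  qed
  have "(\<integral>\<^sup>+x\<in>{0..}. f x * W x \<partial>lborel) = (\<integral>\<^sup>+x\<in>L. f x * W x \<partial>lborel) + (\<integral>\<^sup>+x\<in>R. f x * W x \<partial>lborel)"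
    unfolding LR(1) by (rule nn_integral_disjoint_pair) (auto simp: LR)
  also have "\<dots> \<le> (\<integral>\<^sup>+x\<in>L. g x * W x \<partial>lborel) + c * D1 + (\<integral>\<^sup>+x\<in>R. f x * W x \<partial>lborel)"
    using A by (rule add_right_mono)
  also have "\<dots> = (\<integral>\<^sup>+x\<in>L. g x * W x \<partial>lborel) + ((\<integral>\<^sup>+x\<in>R. f x * W x \<partial>lborel) + c * D2)"
    using D12 by (simp add: ac_simps)
  also have "\<dots> \<le> (\<integral>\<^sup>+x\<in>L. g x * W x \<partial>lborel) + (\<integral>\<^sup>+x\<in>R. g x * W x \<partial>lborel)"
    using B by (rule add_left_mono)
  also have "\<dots> = (\<integral>\<^sup>+x\<in>{0..}. g x * W x \<partial>lborel)"
    unfolding LR(1) by (rule nn_integral_disjoint_pair[symmetric]) (auto simp: LR)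
  finally show ?thesis unfolding eqV f_def g_def .
qed



lemma S_mono:
  fixes V :: "real \<Rightarrow> ennreal"
  assumes sig: "\<sigma> > 0" and V: "mono_on {0..} V" and d: "0 \<le> d" "d \<le> d'"
  shows "(\<integral>\<^sup>+x\<in>{0..}. ennreal (phi \<sigma> x (a * d)) * V x \<partial>lborel)
       \<le> (\<integral>\<^sup>+x\<in>{0..}. ennreal (phi \<sigma> x (a * d')) * V x \<partial>lborel)"
proof -
  have ev: "phi \<sigma> x (a * e) = phi \<sigma> x (\<bar>a\<bar> * e)" for x e
    by (cases "a \<ge> 0") (auto simp: phi_even[of \<sigma> x "a * e", symmetric])
  show ?thesis unfolding ev
    by (rule key_mono[OF sig V]) (use d in \<open>auto intro: mult_left_mono\<close>)
qed

theorem proposition4: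
  fixes a \<sigma> \<gamma> lam p01 p10 :: real and T :: nat
  assumes "\<sigma> > 0" and "\<gamma> > 0" and "lam > 0" and "T \<ge> 1"
    and "0 \<le> p01" and "p01 \<le> 1" and "0 \<le> p10" and "p10 \<le> 1"
  shows "\<forall>c\<in>{0,1}. \<forall>t\<le>T. mono_on {0..} (\<lambda>d. Vt a \<sigma> \<gamma> lam p01 p10 t d c)"
proof -
  have "\<forall>c. mono_on {0..} (\<lambda>d. Vt a \<sigma> \<gamma> lam p01 p10 t d c)" for t
  proof (induction t)
    case 0
    then show ?case by (simp add: mono_on_def)
  next
    case (Suc t)
    show ?case
    proof (intro allI mono_onI)
      fix c and d d' :: real
      assume dd: "d \<in> {0..}" "d' \<in> {0..}" "d \<le> d'"
      define S where "S = (\<lambda>d. \<Sum>c'\<in>{0,1}. ennreal (ptrans p01 p10 c c') *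
            (\<integral>\<^sup>+ x \<in> {0..}. ennreal (phi \<sigma> x (a * d)) * Vt a \<sigma> \<gamma> lam p01 p10 t x c' \<partial>lborel))"
      define K where "K = (\<Sum>c'\<in>{0,1}. ennreal (ptrans p01 p10 c c') *
            (\<integral>\<^sup>+ x \<in> {0..}. ennreal (psi \<sigma> x) * Vt a \<sigma> \<gamma> lam p01 p10 t x c' \<partial>lborel))"
      have VS: "Vt a \<sigma> \<gamma> lam p01 p10 (Suc t) e c =
         min (ennreal (exp (\<gamma> * e\<^sup>2)) * S e)
             (ennreal (1 - real c) * ennreal (exp (\<gamma> * (lam + e\<^sup>2))) * S e
               + ennreal (2 * real c) * ennreal (exp (\<gamma> * lam)) * K)" for e
        by (simp add: S_def K_def)
      have Smono: "S d \<le> S d'"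
        unfolding S_def
        by (intro sum_mono mult_left_mono S_mono[OF assms(1) Suc[rule_format]]) (use dd in auto)
      have sq: "d\<^sup>2 \<le> d'\<^sup>2" using dd by (auto intro: power_mono)
      have e1: "ennreal (exp (\<gamma> * d\<^sup>2)) \<le> ennreal (exp (\<gamma> * d'\<^sup>2))"
        using sq assms(2) by (intro ennreal_leI) auto
      have e2: "ennreal (exp (\<gamma> * (lam + d\<^sup>2))) \<le> ennreal (exp (\<gamma> * (lam + d'\<^sup>2)))"
        using sq assms(2) by (intro ennreal_leI) auto
      show "Vt a \<sigma> \<gamma> lam p01 p10 (Suc t) d c \<le> Vt a \<sigma> \<gamma> lam p01 p10 (Suc t) d' c"
        unfolding VS
        by (intro min.mono add_right_mono mult_mono e1 e2 Smono order_refl) auto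
    qed
  qed
  then show ?thesis by blast
qed

end
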